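(* Let $\mathsf A_1,\dots,\mathsf A_n$ be incompatible observables on a finite-dimensional Hilbert space with $m_1,\dots,m_n$ outcomes respectively. Then $$\chi_{incomp}(\mathsf A_1,\dots,\mathsf A_n)\le\sum_{j=1}^nm_j-n+1.$$
   Context: Observables are POVMs with finitely many outcomes on a $d$-dimensional Hilbert space; $\mathcal S$ is its set of density operators. Observables are compatible if there is a joint observable $\mathsf G$ on the product outcome set whose marginals $\sum_{x_l,l\neq j}\mathsf G(x_1,\dots,x_n)$ equal $\mathsf A_j(x_j)$; otherwise incompatible. For $\mathcal S_0\subset\mathcal S$ they are $\mathcal S_0$-compatible if there are compatible observables $\mathsf A'_j$ (same outcome sets) with $\mathrm{Tr}[\varrho\mathsf A'_j(x)]=\mathrm{Tr}[\varrho\mathsf A_j(x)]$ for all $j,x$ and $\varrho\in\mathcal S_0$; otherwise $\mathcal S_0$-incompatible. $\chi_{incomp}(\mathsf A_1,\dots,\mathsf A_n)=\min\{\dim\mathrm{aff}\mathcal S_0+1:\mathcal S_0\subset\mathcal S,\ \mathsf A_1,\dots,\mathsf A_n\ \mathcal S_0\text{-incompatible}\}$. *)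

theory Defs
  imports "HOL-Analysis.Analysis"
begin

text \<open>Operators on a d-dimensional complex Hilbert space are d x d complex matrices,
  with d = CARD('d) for a finite index type 'd.\<close>

definition psd :: "complex^'d^'d \<Rightarrow> bool" where
  "psd M \<longleftrightarrow> (\<forall>v :: complex^'d.
     let q = (\<Sum>i\<in>UNIV. cnj (v $ i) * (M *v v) $ i) in Im q = 0 \<and> 0 \<le> Re q)"

definition is_observable :: "('o \<Rightarrow> complex^'d^'d) \<Rightarrow> 'o set \<Rightarrow> bool" where
  "is_observable E Om \<longleftrightarrow> finite Om \<and> (\<forall>x\<in>Om. psd (E x)) \<and> (\<Sum>x\<in>Om. E x) = mat 1"

definition density_ops :: "(complex^'d^'d) set" where
  "density_ops = {\<rho>. psd \<rho> \<and> trace \<rho> = 1}"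

text \<open>Observables A 0, ..., A (n-1), where A j has outcome set Om j.\<close>
definition compatible :: "nat \<Rightarrow> (nat \<Rightarrow> 'o set) \<Rightarrow> (nat \<Rightarrow> 'o \<Rightarrow> complex^'d^'d) \<Rightarrow> bool" where
  "compatible n Om A \<longleftrightarrow>
     (\<exists>G. is_observable G (PiE {..<n} Om) \<and>
          (\<forall>j<n. \<forall>x\<in>Om j. (\<Sum>g\<in>{g\<in>PiE {..<n} Om. g j = x}. G g) = A j x))"

definition S0_compatible :: "(complex^'d^'d) set \<Rightarrow> nat \<Rightarrow> (nat \<Rightarrow> 'o set) \<Rightarrow> (nat \<Rightarrow> 'o \<Rightarrow> complex^'d^'d) \<Rightarrow> bool" where
  "S0_compatible S0 n Om A \<longleftrightarrow>
     (\<exists>A'. (\<forall>j<n. is_observable (A' j) (Om j)) \<and> compatible n Om A' \<and>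
          (\<forall>j<n. \<forall>x\<in>Om j. \<forall>\<rho>\<in>S0. trace (\<rho> ** A' j x) = trace (\<rho> ** A j x)))"

text \<open>aff_dim is the dimension of the real affine hull (matrices viewed as a real vector space).\<close>
definition chi_incomp :: "nat \<Rightarrow> (nat \<Rightarrow> 'o set) \<Rightarrow> (nat \<Rightarrow> 'o \<Rightarrow> complex^'d^'d) \<Rightarrow> int" where
  "chi_incomp n Om A = Inf {aff_dim S0 + 1 | S0 :: (complex^'d^'d) set.
       S0 \<subseteq> density_ops \<and> \<not> S0_compatible S0 n Om A}"

end

theory Submission
  imports Defs
begin



definition qf :: "complex^'d^'d \<Rightarrow> complex^'d \<Rightarrow> complex" where
  "qf M v = (\<Sum>a\<in>UNIV. \<Sum>b\<in>UNIV. cnj (v$a) * M$a$b * v$b)"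

lemma psd_iff: "psd M \<longleftrightarrow> (\<forall>v. Im (qf M v) = 0 \<and> 0 \<le> Re (qf M v))"
proof -
  have "\<And>v. (\<Sum>i\<in>UNIV. cnj (v $ i) * (M *v v) $ i) = qf M v"
    by (simp add: qf_def matrix_vector_mult_def sum_distrib_left mult.assoc)
  then show ?thesis unfolding psd_def Let_def by simp
qed

lemma qf_add: "qf (M + N) v = qf M v + qf N v"
  by (simp add: qf_def ring_distribs sum.distrib)

lemma qf_sum: "qf (\<Sum>g\<in>S. F g) v = (\<Sum>g\<in>S. qf (F g) v)"
  by (simp add: qf_def sum_distrib_left sum_distrib_right sum.swap[of _ S])

lemma qf_scaleR: "qf (c *\<^sub>R M) v = of_real c * qf M v"
  unfolding qf_def sum_distrib_left
  unfolding vector_scaleR_component unfolding scaleR_conv_of_real by (simp add: algebra_simps)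

lemma qf_mat1: "qf (mat 1) v = of_real (\<Sum>a\<in>UNIV. (cmod (v$a))^2)"
proof -
  have "qf (mat 1) v = (\<Sum>a\<in>UNIV. cnj (v$a) * v$a)"
    by (simp add: qf_def mat_def if_distrib if_distribR cong: if_cong)
  also have "\<dots> = (\<Sum>a\<in>UNIV. of_real ((cmod (v$a))^2))"
    by (rule sum.cong, simp, metis complex_norm_square mult.commute of_real_power)
  finally show ?thesis by simp
qed

lemma psd_add: "psd M \<Longrightarrow> psd N \<Longrightarrow> psd (M + N)"
  by (simp add: psd_iff qf_add)

lemma psd_sum: "(\<forall>g\<in>S. psd (F g)) \<Longrightarrow> psd (\<Sum>g\<in>S. F g)"
  by (simp add: psd_iff qf_sum sum_nonneg)

lemma psd_scaleR: "psd M \<Longrightarrow> 0 \<le> c \<Longrightarrow> psd (c *\<^sub>R M)"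
  by (simp add: psd_iff qf_scaleR)

definition bf :: "complex^'d^'d \<Rightarrow> complex^'d \<Rightarrow> complex^'d \<Rightarrow> complex" where
  "bf M u w = (\<Sum>a\<in>UNIV. \<Sum>b\<in>UNIV. cnj (u$a) * M$a$b * w$b)"

definition ev :: "'d \<Rightarrow> complex^'d" where "ev a = (\<chi> i. if i = a then 1 else 0)"

lemma qf_bf: "qf M v = bf M v v" by (simp add: qf_def bf_def)

lemma bf_add1: "bf M (u + u') w = bf M u w + bf M u' w"
  by (simp add: bf_def ring_distribs sum.distrib)
lemma bf_add2: "bf M u (w + w') = bf M u w + bf M u w'"
  by (simp add: bf_def ring_distribs sum.distrib)
lemma bf_smult1: "bf M (c *s u) w = cnj c * bf M u w"
  by (simp add: bf_def sum_distrib_left mult.assoc)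
lemma bf_smult2: "bf M u (c *s w) = c * bf M u w"
  by (simp add: bf_def sum_distrib_left mult.assoc mult.left_commute)
lemma bf_ev: "bf M (ev a) (ev b) = M$a$b"
proof -
  have "\<And>x. (\<Sum>y\<in>UNIV. cnj (ev a $ x) * M$x$y * ev b $ y) = (if x = a then M$x$b else 0)"
  proof -
    fix x
    have "(\<Sum>y\<in>UNIV. cnj (ev a $ x) * M$x$y * ev b $ y) = (\<Sum>y\<in>UNIV. if y = b then cnj (ev a $ x) * M$x$y else 0)"
      by (rule sum.cong) (auto simp: ev_def)
    also have "\<dots> = cnj (ev a $ x) * M$x$b" by simp
    finally show "?thesis x" by (simp add: ev_def)
  qed
  then show ?thesis by (simp add: bf_def)
qed

lemma qf_ev1: "qf M (ev a) = M$a$a"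
  by (simp add: qf_bf bf_ev)

lemma qf_ev2: "qf M (ev a + c *s ev b) = M$a$a + c * M$a$b + cnj c * M$b$a + cnj c * c * M$b$b"
  unfolding qf_bf bf_add1 bf_add2 bf_smult1 bf_smult2 bf_ev by (simp add: algebra_simps)



lemma psd_qf: "psd X \<Longrightarrow> Im (qf X v) = 0 \<and> 0 \<le> Re (qf X v)"
  by (simp add: psd_iff)

lemma psd_herm: assumes "psd X" shows "X$b$a = cnj (X$a$b)"
proof (cases "a = b")
  case True
  have "Im (X$a$a) = 0" using psd_qf[OF assms, of "ev a"] by (simp add: qf_ev1)
  then show ?thesis using True by (simp add: complex_eq_iff)
next
  case False
  have 1: "Im (X$a$a) = 0" "Im (X$b$b) = 0" using psd_qf[OF assms, of "ev a"] psd_qf[OF assms, of "ev b"] by (simp_all add: qf_ev1)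
  have 2: "Im (qf X (ev a + 1 *s ev b)) = 0" "Im (qf X (ev a + \<i> *s ev b)) = 0"
    using psd_qf[OF assms] by auto
  then have "Im (X$a$b) + Im (X$b$a) = 0" "Re (X$a$b) - Re (X$b$a) = 0"
    using 1 unfolding qf_ev2 by simp_all
  then show ?thesis by (simp add: complex_eq_iff)
qed

lemma psd_bound: assumes "psd X" "psd Y" "X + Y = mat 1" shows "cmod (X$a$b) \<le> 2"
proof -
  have le: "Re (qf X v) \<le> Re (qf (mat 1) v)" for v
    using assms psd_qf[OF assms(2), of v] by (metis qf_add le_add_same_cancel1 plus_complex.sel(1))
  have d: "0 \<le> Re (X$c$c) \<and> Re (X$c$c) \<le> 1" for c
    using le[of "ev c"] psd_qf[OF assms(1), of "ev c"] by (simp add: qf_ev1 mat_def)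
  show ?thesis
  proof (cases "a = b")
    case True
    have "Im (X$a$a) = 0" using psd_qf[OF assms(1), of "ev a"] by (simp add: qf_ev1)
    then have "cmod (X$a$a) = \<bar>Re (X$a$a)\<bar>" by (simp add: cmod_eq_Re)
    then show ?thesis using d[of a] True by simp
  next
    case False
    have h: "X$b$a = cnj (X$a$b)" by (rule psd_herm[OF assms(1)])
    have m: "(mat 1 :: complex^'a^'a)$a$b = 0" "(mat 1 :: complex^'a^'a)$b$a = 0"
      "(mat 1 :: complex^'a^'a)$a$a = 1" "(mat 1 :: complex^'a^'a)$b$b = 1"
      using False by (simp_all add: mat_def)
    have e1: "Re (qf X (ev a + 1 *s ev b)) \<le> 2" "0 \<le> Re (qf X (ev a + 1 *s ev b))"
      using le[of "ev a + 1 *s ev b"] psd_qf[OF assms(1), of "ev a + 1 *s ev b"]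
      unfolding qf_ev2 m by simp_all
    have e2: "Re (qf X (ev a + \<i> *s ev b)) \<le> 2" "0 \<le> Re (qf X (ev a + \<i> *s ev b))"
      using le[of "ev a + \<i> *s ev b"] psd_qf[OF assms(1), of "ev a + \<i> *s ev b"]
      unfolding qf_ev2 m by simp_all
    have "\<bar>Re (X$a$b)\<bar> \<le> 1" using e1 d[of a] d[of b] unfolding qf_ev2 h by (simp add: abs_le_iff)
    moreover have "\<bar>Im (X$a$b)\<bar> \<le> 1" using e2 d[of a] d[of b] unfolding qf_ev2 h by (simp add: abs_le_iff)
    ultimately show ?thesis using cmod_le[of "X$a$b"] by simp
  qed
qed



definition herm :: "complex^'d^'d \<Rightarrow> bool" where
  "herm D \<longleftrightarrow> (\<forall>a b. D$b$a = cnj (D$a$b))"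

definition tr2 :: "complex^'d^'d \<Rightarrow> complex^'d^'d \<Rightarrow> complex" where
  "tr2 K X = (\<Sum>a\<in>UNIV. \<Sum>b\<in>UNIV. K$a$b * X$b$a)"

lemma trace_mult_tr2: "trace (K ** X) = tr2 K X"
  by (simp add: trace_def tr2_def matrix_matrix_mult_def)

lemma tr2_add1: "tr2 (K + L) X = tr2 K X + tr2 L X"
  by (simp add: tr2_def ring_distribs sum.distrib)
lemma tr2_diff1: "tr2 (K - L) X = tr2 K X - tr2 L X"
  by (simp add: tr2_def ring_distribs sum_subtractf)
lemma tr2_scaleR1: "tr2 (c *\<^sub>R K) X = of_real c * tr2 K X"
  unfolding tr2_def sum_distrib_left vector_scaleR_component unfolding scaleR_conv_of_real
  by (simp add: mult.assoc)
lemma tr2_mat1: "tr2 (mat 1) X = trace X"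
proof -
  have "\<And>a. (\<Sum>b\<in>UNIV. (mat 1 :: complex^'a^'a)$a$b * X$b$a) = X$a$a"
  proof -
    fix a
    have "(\<Sum>b\<in>UNIV. (mat 1 :: complex^'a^'a)$a$b * X$b$a) = (\<Sum>b\<in>UNIV. if b = a then X$b$a else 0)"
      by (rule sum.cong) (auto simp: mat_def)
    then show "?thesis a" by simp
  qed
  then show ?thesis by (simp add: tr2_def trace_def)
qed
lemma tr2_sum2: "tr2 K (\<Sum>g\<in>S. F g) = (\<Sum>g\<in>S. tr2 K (F g))"
proof -
  have "tr2 K (\<Sum>g\<in>S. F g) = (\<Sum>a\<in>UNIV. \<Sum>b\<in>UNIV. \<Sum>g\<in>S. K$a$b * F g$b$a)"
    unfolding tr2_def sum_component sum_distrib_left ..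
  also have "\<dots> = (\<Sum>a\<in>UNIV. \<Sum>g\<in>S. \<Sum>b\<in>UNIV. K$a$b * F g$b$a)"
    by (rule sum.cong[OF refl], rule sum.swap)
  also have "\<dots> = (\<Sum>g\<in>S. \<Sum>a\<in>UNIV. \<Sum>b\<in>UNIV. K$a$b * F g$b$a)"
    by (rule sum.swap)
  finally show ?thesis unfolding tr2_def .
qed

lemma herm_qf_real: assumes "herm D" shows "Im (qf D v) = 0"
proof -
  have "cnj (qf D v) = (\<Sum>a\<in>UNIV. \<Sum>b\<in>UNIV. v$a * D$b$a * cnj (v$b))"
  proof -
    have h: "\<And>a b. cnj (D$a$b) = D$b$a" using assms unfolding herm_def by (metis complex_cnj_cnj)
    show ?thesis by (simp add: qf_def h mult.assoc)
  qed
  also have "\<dots> = qf D v" unfolding qf_def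
    by (subst sum.swap) (simp add: mult.commute mult.left_commute)
  finally have "Im (cnj (qf D v)) = Im (qf D v)" by simp
  then show ?thesis by simp
qed

lemma trace_herm_real: assumes "herm D" shows "trace D = of_real (Re (trace D))"
proof -
  have "\<And>a. Im (D$a$a) = 0"
  proof -
    fix a
    have "Im (D$a$a) = Im (cnj (D$a$a))" using assms unfolding herm_def by metis
    then show "Im (D$a$a) = 0" by simp
  qed
  then have "Im (trace D) = 0" by (simp add: trace_def)
  then show ?thesis by (simp add: complex_eq_iff)
qed

lemma prod_le_S: fixes v :: "complex^'d"
  shows "cmod (v$a) * cmod (v$b) \<le> (\<Sum>i\<in>UNIV. (cmod (v$i))^2)"
proof -
  have "(cmod (v$a))^2 \<le> (\<Sum>i\<in>UNIV. (cmod (v$i))^2)" "(cmod (v$b))^2 \<le> (\<Sum>i\<in>UNIV. (cmod (v$i))^2)"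
    by (auto intro!: member_le_sum)
  moreover have "2 * (cmod (v$a) * cmod (v$b)) \<le> (cmod (v$a))^2 + (cmod (v$b))^2"
    using sum_squares_bound[of "cmod (v$a)" "cmod (v$b)"] by simp
  ultimately show ?thesis by linarith
qed

lemma qf_bound: "cmod (qf D v) \<le> (\<Sum>a\<in>UNIV. \<Sum>b\<in>UNIV. cmod (D$a$b)) * (\<Sum>i\<in>UNIV. (cmod (v$i))^2)"
proof -
  let ?S = "\<Sum>i\<in>UNIV. (cmod (v$i))^2"
  have "cmod (qf D v) \<le> (\<Sum>a\<in>UNIV. \<Sum>b\<in>UNIV. cmod (cnj (v$a) * D$a$b * v$b))"
    unfolding qf_def by (rule order_trans[OF norm_sum sum_mono], rule norm_sum)
  also have "\<dots> \<le> (\<Sum>a\<in>UNIV. \<Sum>b\<in>UNIV. cmod (D$a$b) * ?S)"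
  proof (rule sum_mono, rule sum_mono)
    fix a b
    have "cmod (cnj (v$a) * D$a$b * v$b) = cmod (D$a$b) * (cmod (v$a) * cmod (v$b))"
      by (simp add: norm_mult)
    also have "\<dots> \<le> cmod (D$a$b) * ?S" by (rule mult_left_mono[OF prod_le_S]) simp
    finally show "cmod (cnj (v$a) * D$a$b * v$b) \<le> cmod (D$a$b) * ?S" .
  qed
  also have "\<dots> = (\<Sum>a\<in>UNIV. \<Sum>b\<in>UNIV. cmod (D$a$b)) * ?S"
    by (simp add: sum_distrib_right)
  finally show ?thesis .
qed


lemma state_exists:
  fixes D :: "complex^'d^'d"
  assumes "herm D"
  shows "\<exists>\<rho>\<in>density_ops. \<exists>\<alpha> \<beta>. \<beta> \<noteq> 0 \<and> (\<forall>X. trace (\<rho> ** X) = \<alpha> * trace X + \<beta> * tr2 D X)"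
proof -
  define C where "C = (\<Sum>a\<in>UNIV. \<Sum>b\<in>UNIV. cmod (D$a$b))"
  have C0: "0 \<le> C" unfolding C_def by (simp add: sum_nonneg)
  define t where "t = 1 / (C + 1)"
  have t0: "0 < t" using C0 by (simp add: t_def)
  have tC: "t * C < 1" using C0 by (simp add: t_def field_simps)
  define \<tau> where "\<tau> = Re (trace D)"
  have tauC: "\<bar>\<tau>\<bar> \<le> C"
  proof -
    have "\<bar>\<tau>\<bar> \<le> cmod (trace D)" unfolding \<tau>_def by (rule abs_Re_le_cmod)
    also have "\<dots> \<le> (\<Sum>a\<in>UNIV. cmod (D$a$a))" unfolding trace_def by (rule norm_sum)
    also have "\<dots> \<le> C" unfolding C_def
      by (rule sum_mono) (rule member_le_sum, auto)
    finally show ?thesis .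
  qed
  define c where "c = real CARD('d) + t * \<tau>"
  have "t * \<tau> \<ge> - (t * C)" using tauC t0
    by (metis abs_le_iff minus_le_iff mult_left_mono less_imp_le mult_minus_right)
  then have c0: "0 < c"
  proof -
    have "(1::real) \<le> real CARD('d)" using finite_UNIV_card_ge_0[where 'a='d] by simp
    then show ?thesis unfolding c_def using tC \<open>t * \<tau> \<ge> - (t * C)\<close> by linarith
  qed
  define \<rho> where "\<rho> = (1/c) *\<^sub>R mat 1 + (t/c) *\<^sub>R D"
  have tr: "trace (\<rho> ** X) = of_real (1/c) * trace X + of_real (t/c) * tr2 D X" for X
    unfolding trace_mult_tr2 \<rho>_def tr2_add1 tr2_scaleR1 tr2_mat1 ..
  have trs: "trace (k *\<^sub>R M) = of_real k * trace M" for k and M :: "complex^'d^'d"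
    unfolding trace_def vector_scaleR_component unfolding scaleR_conv_of_real sum_distrib_left ..
  have "trace \<rho> = of_real (1/c) * of_nat CARD('d) + of_real (t/c) * trace D"
    unfolding \<rho>_def trace_add trs trace_I ..
  also have "\<dots> = of_real ((1/c) * real CARD('d) + (t/c) * \<tau>)"
    using trace_herm_real[OF assms] unfolding \<tau>_def
    by (metis of_real_add of_real_mult of_real_of_nat_eq)
  also have "\<dots> = 1"
  proof -
    have "(1/c) * real CARD('d) + (t/c) * \<tau> = (real CARD('d) + t * \<tau>) / c" by (simp add: add_divide_distrib)
    also have "\<dots> = c / c" unfolding c_def ..
    finally have "(1/c) * real CARD('d) + (t/c) * \<tau> = c / c" .
    then show ?thesis using c0 by simp
  qed
  finally have trace1: "trace \<rho> = 1" .
  have psd: "psd \<rho>"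
    unfolding psd_iff
  proof
    fix v :: "complex^'d"
    let ?S = "\<Sum>i\<in>UNIV. (cmod (v$i))^2"
    have q: "qf \<rho> v = of_real (1/c) * of_real ?S + of_real (t/c) * qf D v"
      unfolding \<rho>_def qf_add qf_scaleR qf_mat1 ..
    have "Im (qf \<rho> v) = 0" unfolding q using herm_qf_real[OF assms] by simp
    moreover have "0 \<le> Re (qf \<rho> v)"
    proof -
      have "\<bar>Re (qf D v)\<bar> \<le> C * ?S" using qf_bound[of D v] abs_Re_le_cmod[of "qf D v"] unfolding C_def by linarith
      then have "- (C * ?S) \<le> Re (qf D v)" by linarith
      then have "t * (- (C * ?S)) \<le> t * Re (qf D v)" using t0 by (intro mult_left_mono) auto
      then have "t * Re (qf D v) \<ge> - (t * C * ?S)" by (simp add: mult.assoc)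
      moreover have "t * C * ?S \<le> 1 * ?S"
        by (rule mult_right_mono) (use tC in \<open>auto intro: sum_nonneg\<close>)
      ultimately have "0 \<le> ?S + t * Re (qf D v)" by linarith
      then have "0 \<le> (?S + t * Re (qf D v)) / c" using c0 by simp
      then show ?thesis unfolding q by (simp add: add_divide_distrib)
    qed
    ultimately show "Im (qf \<rho> v) = 0 \<and> 0 \<le> Re (qf \<rho> v)" by simp
  qed
  show ?thesis
    apply (rule bexI[of _ \<rho>])
     apply (rule exI[of _ "of_real (1/c)"], rule exI[of _ "of_real (t/c)"])
    using t0 c0 tr apply simp
    using psd trace1 by (simp add: density_ops_def)
qed



lemma norm_vec_le_sum: "norm (x :: 'a::real_normed_vector^'n) \<le> (\<Sum>i\<in>UNIV. norm (x$i))"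
  unfolding norm_vec_def by (rule L2_set_le_sum) simp

lemma psd_bound_norm: assumes "psd X" "psd Y" "X + Y = mat 1"
  shows "norm (X :: complex^'d^'d) \<le> real (CARD('d) * CARD('d)) * 2"
proof -
  have "norm X \<le> (\<Sum>a\<in>UNIV. norm (X$a))" by (rule norm_vec_le_sum)
  also have "\<dots> \<le> (\<Sum>a\<in>(UNIV::'d set). \<Sum>b\<in>(UNIV::'d set). (2::real))"
  proof (rule sum_mono)
    fix a
    have "norm (X$a) \<le> (\<Sum>b\<in>UNIV. norm (X$a$b))" by (rule norm_vec_le_sum)
    also have "\<dots> \<le> (\<Sum>b\<in>(UNIV::'d set). (2::real))"
      by (rule sum_mono) (use psd_bound[OF assms] in simp)
    finally show "norm (X$a) \<le> (\<Sum>b\<in>(UNIV::'d set). (2::real))" .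
  qed
  also have "\<dots> = real (CARD('d) * CARD('d)) * 2" by simp
  finally show ?thesis .
qed

lemma finite_convergent_subseq:
  fixes X :: "nat \<Rightarrow> 'p \<Rightarrow> 'b::heine_borel"
  assumes "finite P" "\<forall>g\<in>P. bounded (range (\<lambda>k. X k g))"
  shows "\<exists>r L. strict_mono r \<and> (\<forall>g\<in>P. (\<lambda>k. X (r k) g) \<longlonglongrightarrow> L g)"
  using assms
proof (induction P rule: finite_induct)
  case empty
  have "strict_mono (id :: nat \<Rightarrow> nat)" by (rule strict_mono_id)
  then show ?case by blast
next
  case (insert g F)
  then obtain r L where r: "strict_mono r" "\<forall>g\<in>F. (\<lambda>k. X (r k) g) \<longlonglongrightarrow> L g" by auto
  have bg: "bounded (range (\<lambda>k. X k g))" using insert.prems by simp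
  have "range (\<lambda>k. X (r k) g) \<subseteq> range (\<lambda>k. X k g)" by auto
  with bg have "bounded (range (\<lambda>k. X (r k) g))" by (rule bounded_subset)
  from bounded_imp_convergent_subsequence[OF this] obtain l r2 where
    r2: "strict_mono r2" "((\<lambda>k. X (r k) g) \<circ> r2) \<longlonglongrightarrow> l" by blast
  have sm: "strict_mono (r \<circ> r2)" using r(1) r2(1) by (rule strict_mono_o)
  have lim: "(\<lambda>k. X ((r \<circ> r2) k) g') \<longlonglongrightarrow> (L(g := l)) g'" if "g' \<in> insert g F" for g'
  proof (cases "g' = g")
    case True then show ?thesis using r2(2) by (simp add: comp_def)
  next
    case False
    then have "g' \<in> F" using that by simp
    then have "((\<lambda>k. X (r k) g') \<circ> r2) \<longlonglongrightarrow> L g'"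
      using r(2) r2(1) LIMSEQ_subseq_LIMSEQ by blast
    then show ?thesis using False by (simp add: comp_def)
  qed
  show ?case using sm lim by blast
qed

lemma tendsto_qf:
  assumes "(\<lambda>k. M k) \<longlonglongrightarrow> L"
  shows "(\<lambda>k. qf (M k) v) \<longlonglongrightarrow> qf L v"
  unfolding qf_def by (intro tendsto_intros assms)

lemma psd_limit:
  assumes "\<forall>k. psd (M k)" "(\<lambda>k. M k) \<longlonglongrightarrow> L"
  shows "psd L"
  unfolding psd_iff
proof
  fix v
  have t: "(\<lambda>k. qf (M k) v) \<longlonglongrightarrow> qf L v" by (rule tendsto_qf[OF assms(2)])
  have "(\<lambda>k. Im (qf (M k) v)) \<longlonglongrightarrow> Im (qf L v)" by (rule tendsto_Im[OF t])
  moreover have "(\<lambda>k. Im (qf (M k) v)) = (\<lambda>k. 0)" using assms(1) by (simp add: psd_iff)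
  ultimately have "Im (qf L v) = 0" using LIMSEQ_unique tendsto_const by metis
  moreover have "0 \<le> Re (qf L v)"
    by (rule LIMSEQ_le_const[OF tendsto_Re[OF t]]) (use assms(1) in \<open>auto simp: psd_iff\<close>)
  ultimately show "Im (qf L v) = 0 \<and> 0 \<le> Re (qf L v)" by simp
qed

definition marg :: "(nat \<Rightarrow> 'o) set \<Rightarrow> ((nat \<Rightarrow> 'o) \<Rightarrow> complex^'d^'d) \<Rightarrow> nat \<times> 'o \<Rightarrow> complex^'d^'d" where
  "marg P G i = (\<Sum>g\<in>{g\<in>P. g (fst i) = snd i}. G g)"

definition TI :: "'i set \<Rightarrow> ('i \<Rightarrow> complex^'d^'d) \<Rightarrow> ('i \<Rightarrow> complex^'d^'d) \<Rightarrow> real" where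
  "TI I f h = (\<Sum>i\<in>I. inner (f i) (h i))"

lemma inner_expand: "inner (x - t *\<^sub>R y) (x - t *\<^sub>R y) = inner x x - 2 * t * inner x y + t^2 * inner y y"
  by (simp add: inner_diff inner_commute power2_eq_square algebra_simps)

lemma witness:
  fixes Af :: "nat \<times> 'o \<Rightarrow> complex^'d^'d" and P :: "(nat \<Rightarrow> 'o) set"
  assumes finP: "finite P" and finI: "finite I"
    and ne: "\<exists>G :: (nat \<Rightarrow> 'o) \<Rightarrow> complex^'d^'d. is_observable G P"
    and notin: "\<forall>G :: (nat \<Rightarrow> 'o) \<Rightarrow> complex^'d^'d. is_observable G P \<longrightarrow> (\<exists>i\<in>I. marg P G i \<noteq> Af i)"
  shows "\<exists>h. \<forall>G :: (nat \<Rightarrow> 'o) \<Rightarrow> complex^'d^'d. is_observable G P \<longrightarrow> TI I h (marg P G) < TI I h Af"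
proof -
  define J where "J = {G :: (nat \<Rightarrow> 'o) \<Rightarrow> complex^'d^'d. is_observable G P}"
  define Dist where "Dist G = TI I (\<lambda>i. Af i - marg P G i) (\<lambda>i. Af i - marg P G i)" for G
  have D0: "0 \<le> Dist G" for G unfolding Dist_def TI_def by (simp add: sum_nonneg)
  define \<delta> where "\<delta> = Inf (Dist ` J)"
  have Jne: "Dist ` J \<noteq> {}" using ne unfolding J_def by auto
  have bdd: "bdd_below (Dist ` J)" by (rule bdd_belowI[of _ 0]) (use D0 in auto)
  have "\<forall>k. \<exists>G\<in>J. Dist G < \<delta> + inverse (real (Suc k))"
  proof
    fix k
    have "Inf (Dist ` J) < \<delta> + inverse (real (Suc k))" unfolding \<delta>_def by simp
    then obtain x where "x \<in> Dist ` J" "x < \<delta> + inverse (real (Suc k))"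
      using cInf_less_iff[OF Jne bdd] by blast
    then show "\<exists>G\<in>J. Dist G < \<delta> + inverse (real (Suc k))" by blast
  qed
  then have "\<exists>Gs. \<forall>k. Gs k \<in> J \<and> Dist (Gs k) < \<delta> + inverse (real (Suc k))"
    unfolding Bex_def by (rule choice)
  then obtain Gs where Gs: "\<forall>k. Gs k \<in> J \<and> Dist (Gs k) < \<delta> + inverse (real (Suc k))"
    by blast
  have obsJ: "G \<in> J \<longleftrightarrow> (\<forall>g\<in>P. psd (G g)) \<and> (\<Sum>g\<in>P. G g) = mat 1" for G
    unfolding J_def is_observable_def using finP by simp
  have bnd: "\<forall>g\<in>P. bounded (range (\<lambda>k. Gs k g))"
  proof
    fix g assume g: "g \<in> P"
    have "norm (Gs k g) \<le> real (CARD('d) * CARD('d)) * 2" for k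
    proof (rule psd_bound_norm)
      have k: "\<forall>g\<in>P. psd (Gs k g)" "(\<Sum>g\<in>P. Gs k g) = mat 1" using Gs obsJ by auto
      show "psd (Gs k g)" using k g by auto
      show "psd (\<Sum>g'\<in>P - {g}. Gs k g')" using k by (intro psd_sum) auto
      show "Gs k g + (\<Sum>g'\<in>P - {g}. Gs k g') = mat 1"
        using k(2) sum.remove[OF finP g, of "Gs k"] by simp
    qed
    then show "bounded (range (\<lambda>k. Gs k g))" unfolding bounded_iff by auto
  qed
  obtain r L where r: "strict_mono r" "\<forall>g\<in>P. (\<lambda>k. Gs (r k) g) \<longlonglongrightarrow> L g"
    using finite_convergent_subseq[OF finP bnd] by blast
  have LJ: "L \<in> J" unfolding obsJ
  proof
    show "\<forall>g\<in>P. psd (L g)"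
    proof
      fix g assume "g \<in> P"
      show "psd (L g)" by (rule psd_limit[OF _ r(2)[rule_format, OF \<open>g \<in> P\<close>]]) (use Gs obsJ \<open>g \<in> P\<close> in auto)
    qed
    have "(\<lambda>k. \<Sum>g\<in>P. Gs (r k) g) \<longlonglongrightarrow> (\<Sum>g\<in>P. L g)"
      by (rule tendsto_sum) (use r(2) in auto)
    moreover have "(\<lambda>k. \<Sum>g\<in>P. Gs (r k) g) = (\<lambda>k. mat 1)" using Gs obsJ by auto
    ultimately show "(\<Sum>g\<in>P. L g) = mat 1" using LIMSEQ_unique tendsto_const by metis
  qed
  have margt: "(\<lambda>k. marg P (Gs (r k)) i) \<longlonglongrightarrow> marg P L i" for i
    unfolding marg_def by (rule tendsto_sum) (use r(2) in auto)
  have Dt: "(\<lambda>k. Dist (Gs (r k))) \<longlonglongrightarrow> Dist L"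
    unfolding Dist_def TI_def by (intro tendsto_intros margt)
  have "Dist L \<le> \<delta>"
  proof (rule LIMSEQ_le[OF Dt])
    show "(\<lambda>k. \<delta> + inverse (real (Suc k))) \<longlonglongrightarrow> \<delta>"
      using tendsto_add[OF tendsto_const LIMSEQ_inverse_real_of_nat, of \<delta>] by simp
    show "\<exists>N. \<forall>k\<ge>N. Dist (Gs (r k)) \<le> \<delta> + inverse (real (Suc k))"
    proof (intro exI allI impI)
      fix k
      have "k \<le> r k" using seq_suble[OF r(1)] by simp
      then have iv: "inverse (real (Suc (r k))) \<le> inverse (real (Suc k))"
        by (simp add: le_imp_inverse_le)
      have "Dist (Gs (r k)) < \<delta> + inverse (real (Suc (r k)))" using Gs by blast
      then show "Dist (Gs (r k)) \<le> \<delta> + inverse (real (Suc k))" using iv by linarith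
    qed
  qed
  then have minL: "Dist L \<le> Dist G" if "G \<in> J" for G
    using cInf_lower[OF imageI[OF that] bdd] unfolding \<delta>_def by simp
  define B where "B = marg P L"
  define a where "a i = Af i - B i" for i
  have var: "TI I a (marg P G) \<le> TI I a B" if G: "G \<in> J" for G
  proof -
    define C where "C = marg P G"
    define s where "s = TI I a (\<lambda>i. C i - B i)"
    define N where "N = TI I (\<lambda>i. C i - B i) (\<lambda>i. C i - B i)"
    have N0: "0 \<le> N" unfolding N_def TI_def by (simp add: sum_nonneg)
    have key: "2 * s \<le> t * N" if t: "0 < t" "t \<le> 1" for t
    proof -
      define Gt where "Gt g = (1 - t) *\<^sub>R L g + t *\<^sub>R G g" for g
      have "Gt \<in> J" unfolding obsJ
      proof
        show "\<forall>g\<in>P. psd (Gt g)" unfolding Gt_def using LJ G t unfolding obsJ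
          by (auto intro!: psd_add psd_scaleR)
        have "(\<Sum>g\<in>P. Gt g) = (1 - t) *\<^sub>R (\<Sum>g\<in>P. L g) + t *\<^sub>R (\<Sum>g\<in>P. G g)"
          unfolding Gt_def by (simp add: sum.distrib scaleR_sum_right)
        also have "\<dots> = mat 1" using LJ G unfolding obsJ by (simp add: scaleR_left_diff_distrib)
        finally show "(\<Sum>g\<in>P. Gt g) = mat 1" .
      qed
      then have le: "Dist L \<le> Dist Gt" by (rule minL)
      have mGt: "marg P Gt i = B i + t *\<^sub>R (C i - B i)" for i
      proof -
        have "marg P Gt i = (1 - t) *\<^sub>R B i + t *\<^sub>R C i"
          unfolding marg_def Gt_def B_def C_def by (simp add: sum.distrib scaleR_sum_right)
        then show ?thesis by (simp add: algebra_simps)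
      qed
      have "Dist Gt = TI I (\<lambda>i. a i - t *\<^sub>R (C i - B i)) (\<lambda>i. a i - t *\<^sub>R (C i - B i))"
        unfolding Dist_def mGt a_def by (simp add: diff_diff_eq)
      also have "\<dots> = Dist L - 2 * t * s + t^2 * N"
      proof -
        have DL: "Dist L = TI I a a" unfolding Dist_def a_def B_def ..
        show ?thesis unfolding DL TI_def inner_expand s_def N_def
          by (simp add: sum.distrib sum_subtractf sum_distrib_left mult.assoc)
      qed
      finally have "Dist L \<le> Dist L - 2 * t * s + t^2 * N" using le by simp
      then have "2 * t * s \<le> t^2 * N" by linarith
      then have "t * (2 * s) \<le> t * (t * N)" by (simp add: power2_eq_square mult_ac)
      then show ?thesis using t by simp
    qed
    have "s \<le> 0"
    proof (rule ccontr)
      assume "\<not> s \<le> 0"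
      then have s0: "0 < s" by simp
      define t where "t = min 1 (s / (N + 1))"
      have t0: "0 < t" "t \<le> 1" using s0 N0 by (auto simp: t_def)
      have "t * N \<le> (s / (N + 1)) * N" using N0 by (intro mult_right_mono) (auto simp: t_def)
      also have "\<dots> < s"
      proof -
        have "(s / (N + 1)) * N = s * (N / (N + 1))" by simp
        also have "\<dots> < s * 1" using s0 N0 by (intro mult_strict_left_mono) auto
        finally show ?thesis by simp
      qed
      finally show False using key[OF t0] s0 by simp
    qed
    moreover have "s = TI I a C - TI I a B" unfolding s_def TI_def by (simp add: inner_diff_right sum_subtractf)
    ultimately show ?thesis unfolding C_def by simp
  qed
  obtain i0 where i0: "i0 \<in> I" "B i0 \<noteq> Af i0" using notin LJ unfolding J_def B_def by auto
  have "0 < inner (a i0) (a i0)" using i0 unfolding a_def by simp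
  also have "\<dots> \<le> TI I a a" unfolding TI_def by (rule member_le_sum) (use i0 finI in auto)
  finally have pos: "0 < TI I a a" .
  have "TI I a Af = TI I a B + TI I a a" unfolding TI_def a_def
    by (simp add: inner_diff_right sum_subtractf)
  then have "\<forall>G\<in>J. TI I a (marg P G) < TI I a Af" using var pos by force
  then show ?thesis unfolding J_def by auto
qed



definition hp :: "complex^'d^'d \<Rightarrow> complex^'d^'d" where
  "hp Y = (\<chi> a b. (Y$a$b + cnj (Y$b$a)) / 2)"

lemma herm_hp: "herm (hp Y)"
  unfolding herm_def hp_def by (simp add: add.commute)

lemma herm_diff: assumes "herm X" "herm Y" shows "herm (X - Y)"
  unfolding herm_def
proof (intro allI)
  fix a b
  have "X$b$a = cnj (X$a$b)" "Y$b$a = cnj (Y$a$b)" using assms unfolding herm_def by blast+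
  then show "(X - Y)$b$a = cnj ((X - Y)$a$b)" by simp
qed

lemma psd_herm': "psd X \<Longrightarrow> herm X"
  unfolding herm_def using psd_herm by blast

lemma inner_hp: assumes "herm X" shows "inner Y X = Re (tr2 (hp Y) X)"
proof -
  have hx: "\<And>a b. X$b$a = cnj (X$a$b)" using assms unfolding herm_def by blast
  have "Re (tr2 (hp Y) X) = (\<Sum>a\<in>UNIV. \<Sum>b\<in>UNIV. Re (Y$a$b * X$b$a) / 2 + Re (cnj (Y$b$a) * X$b$a) / 2)"
    unfolding tr2_def hp_def by (simp add: ring_distribs add_divide_distrib)
  also have "\<dots> = (\<Sum>a\<in>UNIV. \<Sum>b\<in>UNIV. Re (Y$a$b * X$b$a) / 2) + (\<Sum>a\<in>UNIV. \<Sum>b\<in>UNIV. Re (cnj (Y$b$a) * X$b$a) / 2)"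
    by (simp add: sum.distrib)
  also have "(\<Sum>a\<in>UNIV. \<Sum>b\<in>UNIV. Re (cnj (Y$b$a) * X$b$a) / 2) = (\<Sum>a\<in>UNIV. \<Sum>b\<in>UNIV. Re (cnj (Y$a$b) * X$a$b) / 2)"
    by (rule sum.swap)
  also have "(\<Sum>a\<in>UNIV. \<Sum>b\<in>UNIV. Re (Y$a$b * X$b$a) / 2) = (\<Sum>a\<in>UNIV. \<Sum>b\<in>UNIV. Re (cnj (Y$a$b) * X$a$b) / 2)"
  proof (intro sum.cong refl)
    fix a b :: 'a
    have e: "X$b$a = cnj (X$a$b)" by (rule hx)
    show "Re (Y$a$b * X$b$a) / 2 = Re (cnj (Y$a$b) * X$a$b) / 2" unfolding e by simp
  qed
  also have "(\<Sum>a\<in>UNIV. \<Sum>b\<in>UNIV. Re (cnj (Y$a$b) * X$a$b) / 2) + (\<Sum>a\<in>UNIV. \<Sum>b\<in>UNIV. Re (cnj (Y$a$b) * X$a$b) / 2)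
      = (\<Sum>a\<in>UNIV. \<Sum>b\<in>UNIV. Re (cnj (Y$a$b) * X$a$b))"
    by (simp add: sum.distrib[symmetric])
  also have "\<dots> = inner Y X"
    by (simp add: inner_vec_def inner_complex_def)
  finally show ?thesis ..
qed

lemma psd_mat1: "psd (mat 1 :: complex^'d^'d)"
  unfolding psd_iff qf_mat1 by (simp add: sum_nonneg)

lemma psd_zero: "psd (0 :: complex^'d^'d)"
  unfolding psd_iff by (simp add: qf_def)

lemma mat1_ne0: "(mat 1 :: complex^'d^'d) \<noteq> 0"
proof
  assume "(mat 1 :: complex^'d^'d) = 0"
  then have "(mat 1 :: complex^'d^'d)$undefined$undefined = 0" by simp
  then show False by (simp add: mat_def)
qed

theorem proposition4p5:
  fixes n :: nat and Om :: "nat \<Rightarrow> 'o set" and A :: "nat \<Rightarrow> 'o \<Rightarrow> complex^'d^'d"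
  assumes "\<forall>j<n. is_observable (A j) (Om j)"
    and "\<not> compatible n Om A"
  shows "chi_incomp n Om A \<le> (\<Sum>j<n. int (card (Om j))) - int n + 1"
proof -
  note obs = assms(1)
  define P where "P = PiE {..<n} Om"
  define I where "I = Sigma {..<n} Om"
  define Af where "Af i = A (fst i) (snd i)" for i
  have finOm: "finite (Om j)" if "j < n" for j using obs that unfolding is_observable_def by blast
  have neOm: "Om j \<noteq> {}" if "j < n" for j
  proof
    assume "Om j = {}"
    then have "(mat 1 :: complex^'d^'d) = 0" using obs that unfolding is_observable_def by auto
    then show False using mat1_ne0 by blast
  qed
  have finP: "finite P" unfolding P_def by (rule finite_PiE) (auto intro: finOm)
  have finI: "finite I" unfolding I_def by (rule finite_SigmaI) (auto intro: finOm)
  have "P \<noteq> {}" unfolding P_def PiE_eq_empty_iff using neOm by auto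
  then obtain g0 where g0: "g0 \<in> P" by blast
  have ne: "\<exists>G :: (nat \<Rightarrow> 'o) \<Rightarrow> complex^'d^'d. is_observable G P"
  proof
    show "is_observable (\<lambda>g. if g = g0 then mat 1 else 0 :: complex^'d^'d) P"
      unfolding is_observable_def using finP g0 by (auto simp: psd_mat1 psd_zero)
  qed
  have notin: "\<forall>G :: (nat \<Rightarrow> 'o) \<Rightarrow> complex^'d^'d. is_observable G P \<longrightarrow> (\<exists>i\<in>I. marg P G i \<noteq> Af i)"
  proof (intro allI impI, rule ccontr)
    fix G :: "(nat \<Rightarrow> 'o) \<Rightarrow> complex^'d^'d"
    assume G: "is_observable G P" and "\<not> (\<exists>i\<in>I. marg P G i \<noteq> Af i)"
    then have "\<forall>i\<in>I. marg P G i = Af i" by blast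
    then have "compatible n Om A"
      unfolding compatible_def using G by (auto simp: marg_def Af_def I_def P_def)
    then show False using assms(2) by blast
  qed
  obtain h where h: "\<forall>G :: (nat \<Rightarrow> 'o) \<Rightarrow> complex^'d^'d. is_observable G P \<longrightarrow> TI I h (marg P G) < TI I h Af"
    using witness[OF finP finI ne notin] by blast
  define K where "K i = hp (h i)" for i
  define x0 where "x0 j = (SOME x. x \<in> Om j)" for j
  have x0: "x0 j \<in> Om j" if "j < n" for j unfolding x0_def using neOm[OF that] by (simp add: some_in_eq)
  define D where "D i = K i - K (fst i, x0 (fst i))" for i
  have hD: "herm (D i)" for i unfolding D_def K_def by (intro herm_diff herm_hp)
  define I' where "I' = Sigma {..<n} (\<lambda>j. Om j - {x0 j})"
  have "\<forall>i\<in>I'. \<exists>\<rho>. \<rho> \<in> density_ops \<and> (\<exists>\<alpha> \<beta>. \<beta> \<noteq> 0 \<and> (\<forall>X. trace (\<rho> ** X) = \<alpha> * trace X + \<beta> * tr2 (D i) X))"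
    using state_exists[OF hD] by blast
  then obtain R where R: "\<forall>i\<in>I'. R i \<in> density_ops \<and> (\<exists>\<alpha> \<beta>. \<beta> \<noteq> 0 \<and> (\<forall>X. trace (R i ** X) = \<alpha> * trace X + \<beta> * tr2 (D i) X))"
    by (rule bchoice[THEN exE]) blast
  define dd where "dd = real CARD('d)"
  have dd0: "0 < dd" unfolding dd_def by simp
  define \<rho>0 where "\<rho>0 = (1 / dd) *\<^sub>R (mat 1 :: complex^'d^'d)"
  have tr0: "trace (\<rho>0 ** X) = of_real (1 / dd) * trace X" for X
    unfolding \<rho>0_def trace_mult_tr2 tr2_scaleR1 tr2_mat1 ..
  have \<rho>0d: "\<rho>0 \<in> density_ops"
  proof -
    have "psd \<rho>0" unfolding \<rho>0_def using dd0 by (intro psd_scaleR psd_mat1) auto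
    moreover have "trace \<rho>0 = 1"
    proof -
      have "trace \<rho>0 = trace (\<rho>0 ** mat 1)" by simp
      also have "\<dots> = of_real (1 / dd) * of_real dd" unfolding tr0 trace_I dd_def by simp
      also have "\<dots> = 1" using dd0 by (simp flip: of_real_mult)
      finally show ?thesis .
    qed
    ultimately show ?thesis unfolding density_ops_def by simp
  qed
  define S0 where "S0 = insert \<rho>0 (R ` I')"
  have S0d: "S0 \<subseteq> density_ops" unfolding S0_def using \<rho>0d R by auto
  have finI': "finite I'" unfolding I'_def by (rule finite_SigmaI) (auto intro: finOm)
  have finS0: "finite S0" unfolding S0_def using finI' by simp
  have TIeq: "TI I h (\<lambda>i. X (fst i) (snd i)) =
      (\<Sum>i\<in>I. Re (tr2 (D i) (X (fst i) (snd i)))) + (\<Sum>j<n. Re (tr2 (K (j, x0 j)) (mat 1)))"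
    if X: "\<forall>j<n. is_observable (X j) (Om j)" for X
  proof -
    have "TI I h (\<lambda>i. X (fst i) (snd i)) = (\<Sum>i\<in>I. Re (tr2 (K i) (X (fst i) (snd i))))"
      unfolding TI_def K_def
    proof (rule sum.cong[OF refl])
      fix i assume "i \<in> I"
      then have "psd (X (fst i) (snd i))" using X unfolding I_def is_observable_def by auto
      then show "inner (h i) (X (fst i) (snd i)) = Re (tr2 (hp (h i)) (X (fst i) (snd i)))"
        by (intro inner_hp psd_herm')
    qed
    also have "\<dots> = (\<Sum>i\<in>I. Re (tr2 (D i) (X (fst i) (snd i))) + Re (tr2 (K (fst i, x0 (fst i))) (X (fst i) (snd i))))"
      by (rule sum.cong[OF refl]) (simp add: D_def tr2_diff1)
    also have "\<dots> = (\<Sum>i\<in>I. Re (tr2 (D i) (X (fst i) (snd i)))) + (\<Sum>i\<in>I. Re (tr2 (K (fst i, x0 (fst i))) (X (fst i) (snd i))))"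
      by (rule sum.distrib)
    also have "(\<Sum>i\<in>I. Re (tr2 (K (fst i, x0 (fst i))) (X (fst i) (snd i)))) = (\<Sum>j<n. \<Sum>x\<in>Om j. Re (tr2 (K (j, x0 j)) (X j x)))"
      unfolding I_def by (subst sum.Sigma) (auto intro: finOm simp: case_prod_unfold)
    also have "\<dots> = (\<Sum>j<n. Re (tr2 (K (j, x0 j)) (mat 1)))"
    proof (rule sum.cong[OF refl])
      fix j assume "j \<in> {..<n}"
      then have "(\<Sum>x\<in>Om j. X j x) = mat 1" using X unfolding is_observable_def by auto
      then show "(\<Sum>x\<in>Om j. Re (tr2 (K (j, x0 j)) (X j x))) = Re (tr2 (K (j, x0 j)) (mat 1))"
        by (metis Re_sum tr2_sum2)
    qed
    finally show ?thesis .
  qed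
  have notc: "\<not> S0_compatible S0 n Om A"
  proof
    assume "S0_compatible S0 n Om A"
    then obtain A' where A'obs: "\<forall>j<n. is_observable (A' j) (Om j)" and A'c: "compatible n Om A'"
      and A'eq: "\<forall>j<n. \<forall>x\<in>Om j. \<forall>\<rho>\<in>S0. trace (\<rho> ** A' j x) = trace (\<rho> ** A j x)"
      unfolding S0_compatible_def by blast
    obtain G where G: "is_observable G P" and Gm: "\<forall>j<n. \<forall>x\<in>Om j. (\<Sum>g\<in>{g\<in>P. g j = x}. G g) = A' j x"
      using A'c unfolding compatible_def P_def by blast
    have trEq: "trace (A' j x) = trace (A j x)" if "j < n" "x \<in> Om j" for j x
    proof -
      have "of_real (1 / dd) * trace (A' j x) = of_real (1 / dd) * trace (A j x)"
        using A'eq that unfolding S0_def tr0[symmetric] by blast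
      then show ?thesis using dd0 by simp
    qed
    have DEq: "tr2 (D i) (A' (fst i) (snd i)) = tr2 (D i) (A (fst i) (snd i))" if "i \<in> I" for i
    proof (cases "i \<in> I'")
      case True
      obtain \<alpha> \<beta> where ab: "\<beta> \<noteq> 0" "\<forall>X. trace (R i ** X) = \<alpha> * trace X + \<beta> * tr2 (D i) X"
        using R True by blast
      have j: "fst i < n" "snd i \<in> Om (fst i)" using that unfolding I_def by auto
      have "trace (R i ** A' (fst i) (snd i)) = trace (R i ** A (fst i) (snd i))"
        using A'eq j True unfolding S0_def by blast
      then have "\<beta> * tr2 (D i) (A' (fst i) (snd i)) = \<beta> * tr2 (D i) (A (fst i) (snd i))"
        using ab(2) trEq[OF j] by simp
      then show ?thesis using ab(1) by simp
    next
      case False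
      then have "snd i = x0 (fst i)" using that unfolding I_def I'_def by auto
      then have "D i = 0" unfolding D_def by (metis diff_self prod.collapse)
      then show ?thesis by (simp add: tr2_def)
    qed
    have "TI I h (marg P G) = TI I h (\<lambda>i. A' (fst i) (snd i))"
      unfolding TI_def
    proof (rule sum.cong[OF refl])
      fix i assume "i \<in> I"
      then show "inner (h i) (marg P G i) = inner (h i) (A' (fst i) (snd i))"
        using Gm unfolding marg_def I_def by auto
    qed
    also have "\<dots> = TI I h (\<lambda>i. A (fst i) (snd i))"
      unfolding TIeq[OF A'obs] TIeq[OF obs] using DEq by simp
    finally have "TI I h (marg P G) = TI I h Af" unfolding Af_def .
    moreover have "TI I h (marg P G) < TI I h Af" using h G by blast
    ultimately show False by simp
  qed
  have cardI': "int (card I') = (\<Sum>j<n. int (card (Om j))) - int n"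
  proof -
    have "card I' = (\<Sum>j<n. card (Om j - {x0 j}))" unfolding I'_def
      by (rule card_SigmaI) (auto intro: finOm)
    then have "int (card I') = (\<Sum>j<n. int (card (Om j - {x0 j})))" by simp
    also have "\<dots> = (\<Sum>j<n. int (card (Om j)) - 1)"
    proof (rule sum.cong[OF refl])
      fix j assume "j \<in> {..<n}"
      then have "j < n" by simp
      have "card (Om j) \<ge> 1" using finOm[OF \<open>j < n\<close>] neOm[OF \<open>j < n\<close>] by (simp add: Suc_le_eq card_gt_0_iff)
      then show "int (card (Om j - {x0 j})) = int (card (Om j)) - 1"
        using x0[OF \<open>j < n\<close>] finOm[OF \<open>j < n\<close>] by (simp add: of_nat_diff)
    qed
    also have "\<dots> = (\<Sum>j<n. int (card (Om j))) - int n" by (simp add: sum_subtractf)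
    finally show ?thesis .
  qed
  have cardS0: "int (card S0) \<le> (\<Sum>j<n. int (card (Om j))) - int n + 1"
  proof -
    have "card S0 \<le> Suc (card (R ` I'))" unfolding S0_def by (rule card_insert_le_m1) simp_all
    also have "card (R ` I') \<le> card I'" by (rule card_image_le[OF finI'])
    finally have "card S0 \<le> Suc (card I')" by simp
    then show ?thesis using cardI' by linarith
  qed
  have mem: "aff_dim S0 + 1 \<in> {aff_dim S0 + 1 | S0 :: (complex^'d^'d) set. S0 \<subseteq> density_ops \<and> \<not> S0_compatible S0 n Om A}"
    using S0d notc by blast
  have bdd: "bdd_below {aff_dim S0 + 1 | S0 :: (complex^'d^'d) set. S0 \<subseteq> density_ops \<and> \<not> S0_compatible S0 n Om A}"
  proof (rule bdd_belowI[of _ 0])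
    fix x assume "x \<in> {aff_dim S0 + 1 | S0 :: (complex^'d^'d) set. S0 \<subseteq> density_ops \<and> \<not> S0_compatible S0 n Om A}"
    then obtain T :: "(complex^'d^'d) set" where "x = aff_dim T + 1" by blast
    then show "0 \<le> x" using aff_dim_geq[of T] by linarith
  qed
  have "chi_incomp n Om A \<le> aff_dim S0 + 1"
    unfolding chi_incomp_def by (rule cInf_lower[OF mem bdd])
  also have "\<dots> \<le> int (card S0)" using aff_dim_le_card[OF finS0] by simp
  also have "\<dots> \<le> (\<Sum>j<n. int (card (Om j))) - int n + 1" by (rule cardS0)
  finally show ?thesis .
qed

end
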